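(* Let $A$ and $B$ be strings with LZ77 parses $Z_A$ and $Z_B$, viewed as strings of tuples. Suppose Alice knows $A$, Bob knows $B$, and the length $\mathrm{LCP}(Z_A,Z_B)$ of the longest common prefix of $Z_A$ and $Z_B$ is known. Then the parties can determine $\ell=\mathrm{LCP}(A,B)$ using $O(1)$ rounds and $O(\lg\ell)$ communication.
   Context: $\mathrm{LCP}(X,Y)$ is the length of the longest common prefix of $X$ and $Y$. The LZ77 parse (without self-references) of a string $S$ divides $S$ greedily from left to right into phrases. The $i$-th phrase, starting at $u_i$, is the longest substring with an earlier occurrence (its source) starting left of $u_i$ and not overlapping the phrase, followed by the next symbol. It is represented as the tuple $(s_i,l_i,\alpha_i)$: source start, source length, and next symbol. A parse is a string over the alphabet of such tuples. Both parties use the same deterministic parsing rule (e.g. leftmost source), so equal strings get equal parses. *)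

theory Defs
  imports Complex_Main
begin

fun lcp :: "'b list \<Rightarrow> 'b list \<Rightarrow> nat" where
  "lcp (x # xs) (y # ys) = (if x = y then Suc (lcp xs ys) else 0)"
| "lcp _ _ = 0"

section \<open>LZ77 parse without self-references (positions are 0-based)\<close>

definition lz_len :: "'a list \<Rightarrow> nat \<Rightarrow> nat" where
  "lz_len S u = (GREATEST l. u + l < length S \<and>
      (\<exists>s. s + l \<le> u \<and> take l (drop s S) = take l (drop u S)))"

text \<open>Deterministic rule: the leftmost source.\<close>
definition lz_src :: "'a list \<Rightarrow> nat \<Rightarrow> nat" where
  "lz_src S u = (LEAST s. s + lz_len S u \<le> u \<and>
      take (lz_len S u) (drop s S) = take (lz_len S u) (drop u S))"

function lz77_from :: "'a list \<Rightarrow> nat \<Rightarrow> (nat \<times> nat \<times> 'a) list" where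
  "lz77_from S u = (if u < length S
     then (lz_src S u, lz_len S u, S ! (u + lz_len S u)) # lz77_from S (u + lz_len S u + 1)
     else [])"
  by pat_completeness auto
termination by (relation "measure (\<lambda>(S, u). length S - u)") auto

definition lz77 :: "'a list \<Rightarrow> (nat \<times> nat \<times> 'a) list" where
  "lz77 S = lz77_from S 0"

text \<open>The message of a round is a bit string computed by the speaker from its own input,
  the common knowledge k, the round number and the transcript so far.\<close>
fun transcript ::
  "(nat \<Rightarrow> 'x \<Rightarrow> nat \<Rightarrow> bool list list \<Rightarrow> bool list) \<Rightarrow>
   (nat \<Rightarrow> 'y \<Rightarrow> nat \<Rightarrow> bool list list \<Rightarrow> bool list) \<Rightarrow>
   'x \<Rightarrow> 'y \<Rightarrow> nat \<Rightarrow> nat \<Rightarrow> bool list list" where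
  "transcript fA fB x y k 0 = []"
| "transcript fA fB x y k (Suc i) =
     (let t = transcript fA fB x y k i in
      t @ [if even i then fA i x k t else fB i y k t])"

definition comm_bits :: "bool list list \<Rightarrow> nat" where
  "comm_bits t = sum_list (map length t)"

end

theory Submission
  imports Defs
begin

section \<open>lcp facts\<close>

lemma lcp_le_iff:
  "n \<le> lcp xs ys \<longleftrightarrow> (n \<le> length xs \<and> n \<le> length ys \<and> take n xs = take n ys)"
proof (induction xs ys arbitrary: n rule: lcp.induct)
  case (1 x xs y ys)
  show ?case
  proof (cases n)
    case 0 then show ?thesis by simp
  next
    case (Suc m)
    show ?thesis
    proof (cases "x = y")
      case True
      then show ?thesis using 1[OF True, of m] Suc by simp
    next
      case False
      then show ?thesis using Suc by simp
    qed
  qed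
qed auto

lemma lcp_comm: "lcp xs ys = lcp ys xs"
  by (induction xs ys rule: lcp.induct) auto

lemma lcp_neq: "lcp xs ys < length xs \<Longrightarrow> lcp xs ys < length ys \<Longrightarrow>
   xs ! lcp xs ys \<noteq> ys ! lcp xs ys"
  by (induction xs ys rule: lcp.induct) auto

lemma lcp_take2: "lcp xs (take n ys) = min (lcp xs ys) n"
proof (induction xs ys arbitrary: n rule: lcp.induct)
  case (1 x xs y ys)
  then show ?case by (cases n) auto
next
  case ("2_1" ys)
  then show ?case by simp
next
  case ("2_2" xs)
  then show ?case by (cases n) auto
qed

lemma lcp_take1: "lcp (take n xs) ys = min (lcp xs ys) n"
  using lcp_take2[of ys n xs] by (simp add: lcp_comm)

lemma lcp_le_len: "lcp xs ys \<le> length xs" "lcp xs ys \<le> length ys"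
  using lcp_le_iff[of "lcp xs ys" xs ys] by auto

section \<open>binary codes\<close>

fun bin :: "nat \<Rightarrow> bool list" where
  "bin n = (if n = 0 then [] else odd n # bin (n div 2))"

declare bin.simps[simp del]

lemma bin_0[simp]: "bin 0 = []"
  by (subst bin.simps) simp

lemma bin_pos: "n \<noteq> 0 \<Longrightarrow> bin n = odd n # bin (n div 2)"
  by (subst bin.simps) simp

primrec unbin :: "bool list \<Rightarrow> nat" where
  "unbin [] = 0"
| "unbin (b # bs) = (if b then 1 else 0) + 2 * unbin bs"

lemma unbin_bin[simp]: "unbin (bin n) = n"
proof (induction n rule: bin.induct)
  case (1 n)
  show ?case
  proof (cases "n = 0")
    case True then show ?thesis by (simp add: bin_pos)
  next
    case False
    then have "bin n = odd n # bin (n div 2)" by (simp add: bin_pos)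
    then show ?thesis using 1 False by simp
  qed
qed

lemma bin_len: "n > 0 \<Longrightarrow> 2 ^ (length (bin n) - 1) \<le> n"
proof (induction n rule: bin.induct)
  case (1 n)
  show ?case
  proof (cases "n div 2 = 0")
    case True
    then have "n = 1" using 1 by auto
    then show ?thesis by (simp add: bin_pos)
  next
    case False
    then have IH: "2 ^ (length (bin (n div 2)) - 1) \<le> n div 2" using 1 by auto
    moreover have "length (bin (n div 2)) \<ge> 1" using False by (simp add: bin_pos)
    moreover have "length (bin n) = Suc (length (bin (n div 2)))"
      using 1 by (simp add: bin_pos)
    ultimately have "2 ^ (length (bin n) - 1) = (2::nat) * 2 ^ (length (bin (n div 2)) - 1)"
      by (cases "length (bin (n div 2))") auto
    also have "\<dots> \<le> 2 * (n div 2)" using IH by simp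
    also have "\<dots> \<le> n" by simp
    finally show ?thesis .
  qed
qed

lemma bin_len_log: "n \<le> L \<Longrightarrow> real (length (bin n)) \<le> 2 * log 2 (real L + 2)"
proof -
  assume nL: "n \<le> L"
  have e: "real (L + 2) = real L + 2" by simp
  have "real (1::nat) \<le> log 2 (real (L + 2))" by (rule le_log2_of_power) simp
  then have l1: "1 \<le> log 2 (real L + 2)" unfolding e by simp
  show ?thesis
  proof (cases "n = 0")
    case True
    then have "length (bin n) = 0" by (simp add: bin_pos)
    then show ?thesis using l1 by simp
  next
    case False
    then have "2 ^ (length (bin n) - 1) \<le> L + 2" using bin_len[of n] nL by linarith
    then have "real (length (bin n) - 1) \<le> log 2 (real (L + 2))"
      by (rule le_log2_of_power)
    then have h: "real (length (bin n) - 1) \<le> log 2 (real L + 2)" unfolding e .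
    have "length (bin n) \<ge> 1" using False by (simp add: bin_pos)
    then have "real (length (bin n) - 1) = real (length (bin n)) - 1" by (simp add: of_nat_diff)
    then show ?thesis using l1 h by linarith
  qed
qed

section \<open>LZ77 facts\<close>

declare lz77_from.simps[simp del]

lemma lz77_from_in: "u < length S \<Longrightarrow> lz77_from S u =
  (lz_src S u, lz_len S u, S ! (u + lz_len S u)) # lz77_from S (u + lz_len S u + 1)"
  by (subst lz77_from.simps) simp

lemma lz77_from_out: "\<not> u < length S \<Longrightarrow> lz77_from S u = []"
  by (subst lz77_from.simps) simp

lemma lz_len_prop:
  assumes "u < length S"
  shows "u + lz_len S u < length S \<and>
    (\<exists>s. s + lz_len S u \<le> u \<and> take (lz_len S u) (drop s S) = take (lz_len S u) (drop u S))"
  unfolding lz_len_def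
proof (rule GreatestI_nat[where k = 0 and b = "length S"])
  show "u + 0 < length S \<and> (\<exists>s. s + 0 \<le> u \<and> take 0 (drop s S) = take 0 (drop u S))"
    using assms by auto
next
  fix y assume "u + y < length S \<and> (\<exists>s. s + y \<le> u \<and> take y (drop s S) = take y (drop u S))"
  then show "y \<le> length S" by auto
qed

lemma lz_len_max:
  assumes "u + l < length S" "s + l \<le> u" "take l (drop s S) = take l (drop u S)"
  shows "l \<le> lz_len S u"
  unfolding lz_len_def
proof (rule Greatest_le_nat[where b = "length S"])
  show "u + l < length S \<and> (\<exists>s. s + l \<le> u \<and> take l (drop s S) = take l (drop u S))"
    using assms by auto
next
  fix y assume "u + y < length S \<and> (\<exists>s. s + y \<le> u \<and> take y (drop s S) = take y (drop u S))"
  then show "y \<le> length S" by auto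
qed

lemma lz_src_prop:
  assumes "u < length S"
  shows "lz_src S u + lz_len S u \<le> u \<and>
    take (lz_len S u) (drop (lz_src S u) S) = take (lz_len S u) (drop u S)"
  unfolding lz_src_def
  by (rule LeastI_ex) (use lz_len_prop[OF assms] in blast)

lemma take_drop_nth:
  assumes "take l (drop a S) = take l (drop b S)" "i < l" "a + l \<le> length S" "b + l \<le> length S"
  shows "S ! (a + i) = S ! (b + i)"
proof -
  have "take l (drop a S) ! i = take l (drop b S) ! i" by (simp only: assms(1))
  moreover have "take l (drop a S) ! i = S ! (a + i)" using assms(2-4) by simp
  moreover have "take l (drop b S) ! i = S ! (b + i)" using assms(2-4) by simp
  ultimately show ?thesis by metis
qed

lemma take_eq_nth: "take n A = take n B \<Longrightarrow> i < n \<Longrightarrow> A ! i = B ! i"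
proof -
  assume h: "take n A = take n B" and i: "i < n"
  have "take n A ! i = take n B ! i" using h by simp
  then show ?thesis using i by simp
qed

lemma take_eq_len: "take n A = take n B \<Longrightarrow> n \<le> length A \<Longrightarrow> n \<le> length B"
proof -
  assume h: "take n A = take n B" and n: "n \<le> length A"
  have "length (take n A) = length (take n B)" using h by simp
  then show ?thesis using n by (simp add: min_def split: if_splits)
qed

definition phsum :: "(nat \<times> nat \<times> 'a) list \<Rightarrow> nat" where
  "phsum xs = sum_list (map (\<lambda>(s, l, a). Suc l) xs)"

lemma phsum_Cons[simp]: "phsum ((s, l, a) # xs) = Suc l + phsum xs"
  by (simp add: phsum_def)

lemma phsum_Nil[simp]: "phsum [] = 0"
  by (simp add: phsum_def)

lemma L1: "j \<le> length (lz77_from S u) \<Longrightarrow>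
  drop j (lz77_from S u) = lz77_from S (u + phsum (take j (lz77_from S u)))"
proof (induction j arbitrary: u)
  case 0
  then show ?case by simp
next
  case (Suc j)
  then have "u < length S" using lz77_from_out by fastforce
  note e = lz77_from_in[OF this]
  have "j \<le> length (lz77_from S (u + lz_len S u + 1))" using Suc.prems e by simp
  from Suc.IH[OF this] show ?case unfolding e by (simp add: add.assoc)
qed

lemma take_step:
  assumes t: "take u A = take u B" and uA: "u < length A" and uB: "u < length B"
    and len: "lz_len A u = lz_len B u" and src: "lz_src A u = lz_src B u"
    and last: "A ! (u + lz_len A u) = B ! (u + lz_len B u)"
  shows "take (u + lz_len A u + 1) A = take (u + lz_len A u + 1) B"
proof -
  define l where "l = lz_len A u"
  define s where "s = lz_src A u"
  have pA: "u + l < length A" "s + l \<le> u" "take l (drop s A) = take l (drop u A)"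
    using lz_len_prop[OF uA] lz_src_prop[OF uA] unfolding l_def s_def by auto
  have pB: "u + l < length B" "s + l \<le> u" "take l (drop s B) = take l (drop u B)"
    using lz_len_prop[OF uB] lz_src_prop[OF uB] unfolding l_def s_def len src by auto
  show ?thesis
  proof (rule nth_equalityI)
    show "length (take (u + lz_len A u + 1) A) = length (take (u + lz_len A u + 1) B)"
      using pA pB unfolding l_def by simp
  next
    fix i assume "i < length (take (u + lz_len A u + 1) A)"
    then have i: "i < u + l + 1" unfolding l_def by simp
    have "A ! i = B ! i"
    proof -
      consider "i < u" | "u \<le> i" "i < u + l" | "i = u + l" using i by linarith
      then show ?thesis
      proof cases
        case 1 then show ?thesis using take_eq_nth[OF t] by blast
      next
        case 2
        define j where "j = i - u"
        have j: "j < l" "i = u + j" using 2 unfolding j_def by auto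
        have "A ! i = A ! (s + j)" using take_drop_nth[OF pA(3) j(1)] pA j by simp
        also have "\<dots> = B ! (s + j)" using take_eq_nth[OF t] j pA(2) by simp
        also have "\<dots> = B ! i" using take_drop_nth[OF pB(3) j(1)] pB j by simp
        finally show ?thesis .
      next
        case 3 then show ?thesis using last len unfolding l_def by simp
      qed
    qed
    then show "take (u + lz_len A u + 1) A ! i = take (u + lz_len A u + 1) B ! i"
      using i unfolding l_def by simp
  qed
qed

lemma L2: "take u A = take u B \<Longrightarrow> take j (lz77_from A u) = take j (lz77_from B u) \<Longrightarrow>
  take (u + phsum (take j (lz77_from A u))) A = take (u + phsum (take j (lz77_from A u))) B"
proof (induction j arbitrary: u)
  case 0
  then show ?case by simp
next
  case (Suc j)
  show ?case
  proof (cases "u < length A")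
    case False
    then show ?thesis using Suc.prems lz77_from_out[OF False] by simp
  next
    case True
    note eA = lz77_from_in[OF True]
    have "lz77_from B u \<noteq> []" using Suc.prems(2) eA by auto
    then have uB: "u < length B" using lz77_from_out by blast
    note eB = lz77_from_in[OF uB]
    have hd: "lz_src A u = lz_src B u" "lz_len A u = lz_len B u"
        "A ! (u + lz_len A u) = B ! (u + lz_len B u)"
      and tl: "take j (lz77_from A (u + lz_len A u + 1)) = take j (lz77_from B (u + lz_len A u + 1))"
      using Suc.prems(2) unfolding eA eB by auto
    have t1: "take (u + lz_len A u + 1) A = take (u + lz_len A u + 1) B"
      using take_step[OF Suc.prems(1) True uB hd(2) hd(1) hd(3)] .
    from Suc.IH[OF t1 tl] show ?thesis unfolding eA by (simp add: add.assoc)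
  qed
qed

definition qpos :: "'a list \<Rightarrow> nat \<Rightarrow> nat" where
  "qpos S k = phsum (take k (lz77 S))"

definition info :: "'a list \<Rightarrow> nat \<Rightarrow> nat \<times> nat" where
  "info S k = (if k < length (lz77 S) then (fst (lz77 S ! k), fst (snd (lz77 S ! k))) else (0, 0))"

definition recon :: "'a list \<Rightarrow> nat \<Rightarrow> nat \<Rightarrow> nat \<Rightarrow> 'a list" where
  "recon S k s l = take (qpos S k) S @ map (\<lambda>i. S ! (s + i)) [0..<l]"

lemma phrase:
  assumes "k < length (lz77 S)"
  shows "qpos S k < length S \<and> lz77 S ! k =
     (lz_src S (qpos S k), lz_len S (qpos S k), S ! (qpos S k + lz_len S (qpos S k)))"
proof -
  have d: "drop k (lz77 S) = lz77_from S (qpos S k)"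
    using L1[of k S 0] assms unfolding lz77_def qpos_def by simp
  have ne: "drop k (lz77 S) \<noteq> []" using assms by simp
  have q: "qpos S k < length S"
  proof (rule ccontr)
    assume "\<not> qpos S k < length S"
    then have "lz77_from S (qpos S k) = []" by (rule lz77_from_out)
    then show False using ne d by simp
  qed
  have "lz77 S ! k = hd (drop k (lz77 S))" using assms by (simp add: hd_drop_conv_nth)
  then show ?thesis using q d lz77_from_in[OF q] by simp
qed

lemma ended:
  assumes "k = length (lz77 S)"
  shows "length S \<le> qpos S k"
proof -
  have d: "drop k (lz77 S) = lz77_from S (qpos S k)"
    using L1[of k S 0] assms unfolding lz77_def qpos_def by simp
  then have "lz77_from S (qpos S k) = []" using assms by simp
  show ?thesis
  proof (rule ccontr)
    assume "\<not> length S \<le> qpos S k"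
    then have "qpos S k < length S" by simp
    from lz77_from_in[OF this] show False using \<open>lz77_from S (qpos S k) = []\<close> by simp
  qed
qed

lemma common:
  assumes "k \<le> lcp (lz77 A) (lz77 B)"
  shows "qpos A k = qpos B k" "take (qpos A k) A = take (qpos A k) B"
proof -
  have t: "take k (lz77 A) = take k (lz77 B)" using assms lcp_le_iff by blast
  then show "qpos A k = qpos B k" unfolding qpos_def by simp
  show "take (qpos A k) A = take (qpos A k) B"
    using L2[of 0 A B k] t unfolding qpos_def lz77_def by simp
qed

lemma info_facts:
  assumes t: "take (qpos A k) A = take (qpos A k) B" and qq: "qpos A k = qpos B k"
  shows "recon B k (fst (info A k)) (snd (info A k)) = take (qpos A k + snd (info A k)) A
     \<and> fst (info A k) + snd (info A k) \<le> lcp A B"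
proof (cases "k < length (lz77 A)")
  case False
  then have "info A k = (0, 0)" unfolding info_def by simp
  then show ?thesis unfolding recon_def using t qq by simp
next
  case True
  define q where "q = qpos A k"
  define l where "l = lz_len A q"
  define s where "s = lz_src A q"
  have q: "q < length A" and inf: "info A k = (s, l)"
    using phrase[OF True] True unfolding info_def q_def l_def s_def by auto
  have p: "q + l < length A" "s + l \<le> q" "take l (drop s A) = take l (drop q A)"
    using lz_len_prop[OF q] lz_src_prop[OF q] unfolding l_def s_def by auto
  have tq: "take q A = take q B" using t q_def by simp
  have qB: "q \<le> length B" using take_eq_len[OF tq] q by simp
  have qL: "q \<le> lcp A B" using lcp_le_iff tq q qB by fastforce
  have m: "map (\<lambda>i. B ! (s + i)) [0..<l] = take l (drop q A)"
  proof (rule nth_equalityI)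
    show "length (map (\<lambda>i. B ! (s + i)) [0..<l]) = length (take l (drop q A))" using p by simp
  next
    fix i assume "i < length (map (\<lambda>i. B ! (s + i)) [0..<l])"
    then have i: "i < l" by simp
    have "B ! (s + i) = A ! (s + i)" using take_eq_nth[OF tq, of "s + i"] i p by simp
    also have "\<dots> = A ! (q + i)" using take_drop_nth[OF p(3) i] p by simp
    finally show "map (\<lambda>i. B ! (s + i)) [0..<l] ! i = take l (drop q A) ! i" using i p by simp
  qed
  have "recon B k s l = take (q + l) A"
    unfolding recon_def qq[symmetric] q_def[symmetric] m tq[symmetric] by (simp add: take_add)
  then show ?thesis using inf p qL q_def by simp
qed

lemma K1:
  assumes tq: "take q A = take q B" and qA: "q < length A" and qB: "q < length B"
    and lt: "lz_len A q < lz_len B q"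
  shows "lcp A B \<le> q + lz_len A q + 1"
proof (rule ccontr)
  assume "\<not> lcp A B \<le> q + lz_len A q + 1"
  then have ge: "q + lz_len A q + 2 \<le> lcp A B" by simp
  define la where "la = lz_len A q"
  define lb where "lb = lz_len B q"
  define sb where "sb = lz_src B q"
  have pB: "q + lb < length B" "sb + lb \<le> q" "take lb (drop sb B) = take lb (drop q B)"
    using lz_len_prop[OF qB] lz_src_prop[OF qB] unfolding lb_def sb_def by auto
  have tL: "take (q + la + 2) A = take (q + la + 2) B" "q + la + 2 \<le> length A"
    using ge lcp_le_iff[of "q + la + 2" A B] unfolding la_def by auto
  have lab: "la < lb" using lt unfolding la_def lb_def .
  have eq: "take (la + 1) (drop sb A) = take (la + 1) (drop q A)"
  proof (rule nth_equalityI)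
    show "length (take (la + 1) (drop sb A)) = length (take (la + 1) (drop q A))"
      using tL pB lab by simp
  next
    fix i assume "i < length (take (la + 1) (drop sb A))"
    then have i: "i < la + 1" by simp
    have "A ! (sb + i) = B ! (sb + i)" using take_eq_nth[OF tq, of "sb + i"] i pB lab by simp
    also have "\<dots> = B ! (q + i)" using take_drop_nth[OF pB(3), of i] i lab pB by simp
    also have "\<dots> = A ! (q + i)" using take_eq_nth[OF tL(1), of "q + i"] i by simp
    finally show "take (la + 1) (drop sb A) ! i = take (la + 1) (drop q A) ! i"
      using i tL pB lab by simp
  qed
  have "la + 1 \<le> lz_len A q"
    by (rule lz_len_max[OF _ _ eq]) (use tL pB lab in auto)
  then show False unfolding la_def by simp
qed

lemma take_drop_within: "s + l \<le> q \<Longrightarrow> take l (drop s (take q X)) = take l (drop s X)"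
  by (simp add: drop_take min_def)

lemma K2:
  assumes tq: "take q A = take q B" and qA: "q < length A" and qB: "q < length B"
    and eq: "lz_len A q = lz_len B q" and ge: "q + lz_len A q + 1 \<le> lcp A B"
  shows "lz_src A q = lz_src B q \<and> A ! (q + lz_len A q) = B ! (q + lz_len B q)"
proof -
  define l where "l = lz_len A q"
  have tL: "take (q + l + 1) A = take (q + l + 1) B"
    using ge lcp_le_iff[of "q + l + 1" A B] unfolding l_def by auto
  have e1: "take l (drop q A) = take l (drop q B)"
  proof -
    have "take l (drop q A) = drop q (take (q + l) A)" by (simp add: take_drop add.commute)
    also have "take (q + l) A = take (q + l) (take (q + l + 1) A)" by simp
    also have "\<dots> = take (q + l) (take (q + l + 1) B)" using tL by simp
    also have "\<dots> = take (q + l) B" by simp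
    also have "drop q \<dots> = take l (drop q B)" by (simp add: take_drop add.commute)
    finally show ?thesis .
  qed
  have P: "(\<lambda>s. s + l \<le> q \<and> take l (drop s A) = take l (drop q A)) =
           (\<lambda>s. s + l \<le> q \<and> take l (drop s B) = take l (drop q B))"
  proof (rule ext)
    fix s
    show "(s + l \<le> q \<and> take l (drop s A) = take l (drop q A)) =
          (s + l \<le> q \<and> take l (drop s B) = take l (drop q B))"
    proof (cases "s + l \<le> q")
      case True
      then have "take l (drop s A) = take l (drop s B)"
        using take_drop_within[OF True, of A] take_drop_within[OF True, of B] tq by simp
      then show ?thesis using e1 by simp
    qed simp
  qed
  have "lz_src A q = lz_src B q"
    unfolding lz_src_def l_def[symmetric] eq[symmetric] using P by simp
  moreover have "A ! (q + l) = B ! (q + l)" using take_eq_nth[OF tL, of "q + l"] by simp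
  ultimately show ?thesis using eq unfolding l_def by simp
qed

lemma key:
  assumes k: "k = lcp (lz77 A) (lz77 B)"
  shows "lcp A B \<le> qpos A k + max (snd (info A k)) (snd (info B k))"
proof -
  define q where "q = qpos A k"
  have c: "qpos A k = qpos B k" "take (qpos A k) A = take (qpos A k) B" using common[of k A B] k by auto
  have tq: "take q A = take q B" using c q_def by simp
  have qB': "qpos B k = q" using c q_def by simp
  have kA: "k \<le> length (lz77 A)" "k \<le> length (lz77 B)" using k lcp_le_len by auto
  show ?thesis
  proof (cases "k = length (lz77 A)")
    case True
    then show ?thesis using ended[OF True] lcp_le_len(1)[of A B] q_def by linarith
  next
    case FA: False
    show ?thesis
    proof (cases "k = length (lz77 B)")
      case True
      then show ?thesis using ended[OF True] lcp_le_len(2)[of A B] qB' q_def by linarith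
    next
      case FB: False
      have kA2: "k < length (lz77 A)" "k < length (lz77 B)" using FA FB kA by auto
      have neq: "lz77 A ! k \<noteq> lz77 B ! k" using lcp_neq kA2 k by blast
      have phA: "q < length A" "lz77 A ! k = (lz_src A q, lz_len A q, A ! (q + lz_len A q))"
        using phrase[OF kA2(1)] q_def by auto
      have phB: "q < length B" "lz77 B ! k = (lz_src B q, lz_len B q, B ! (q + lz_len B q))"
        using phrase[OF kA2(2)] qB' by auto
      have iA: "snd (info A k) = lz_len A q" using kA2 phA unfolding info_def by simp
      have iB: "snd (info B k) = lz_len B q" using kA2 phB unfolding info_def by simp
      consider "lz_len A q < lz_len B q" | "lz_len B q < lz_len A q" | "lz_len A q = lz_len B q"
        by linarith
      then show ?thesis
      proof cases
        case 1
        then show ?thesis using K1[OF tq phA(1) phB(1) 1] iA iB q_def by simp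
      next
        case 2
        have "lcp B A \<le> q + lz_len B q + 1" using K1[OF tq[symmetric] phB(1) phA(1) 2] .
        then show ?thesis using 2 iA iB q_def lcp_comm[of A B] by simp
      next
        case 3
        show ?thesis
        proof (rule ccontr)
          assume "\<not> ?thesis"
          then have "q + lz_len A q + 1 \<le> lcp A B" using iA iB 3 q_def by simp
          from K2[OF tq phA(1) phB(1) 3 this] have "lz77 A ! k = lz77 B ! k"
            using phA phB 3 by simp
          then show False using neq by simp
        qed
      qed
    qed
  qed
qed

definition fA0 :: "nat \<Rightarrow> 'a list \<Rightarrow> nat \<Rightarrow> bool list list \<Rightarrow> bool list" where
  "fA0 i A k t = (if i = 0 then bin (fst (info A k)) else if i = 2 then bin (snd (info A k))
     else if i = 4 then bin (lcp A (recon A k (unbin (t ! 1)) (unbin (t ! 3)))) else [])"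

definition fB0 :: "nat \<Rightarrow> 'a list \<Rightarrow> nat \<Rightarrow> bool list list \<Rightarrow> bool list" where
  "fB0 i B k t = (if i = 1 then bin (fst (info B k)) else if i = 3 then bin (snd (info B k))
     else if i = 5 then bin (lcp (recon B k (unbin (t ! 0)) (unbin (t ! 2))) B) else [])"

definition outA0 :: "'a list \<Rightarrow> nat \<Rightarrow> bool list list \<Rightarrow> nat" where
  "outA0 A k t = max (lcp A (recon A k (unbin (t ! 1)) (unbin (t ! 3)))) (unbin (t ! 5))"

definition outB0 :: "'a list \<Rightarrow> nat \<Rightarrow> bool list list \<Rightarrow> nat" where
  "outB0 B k t = max (unbin (t ! 4)) (lcp (recon B k (unbin (t ! 0)) (unbin (t ! 2))) B)"

lemma dvd2_SS: "Suc (Suc 0) dvd Suc (Suc n) \<longleftrightarrow> Suc (Suc 0) dvd n"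
  by presburger

lemma dvd2_1: "\<not> Suc (Suc 0) dvd Suc 0"
  by presburger

lemma transcript6:
  "transcript fA0 fB0 A B k 6 =
    [bin (fst (info A k)), bin (fst (info B k)), bin (snd (info A k)), bin (snd (info B k)),
     bin (lcp A (recon A k (fst (info B k)) (snd (info B k)))),
     bin (lcp (recon B k (fst (info A k)) (snd (info A k))) B)]"
  by (simp add: Let_def eval_nat_numeral fA0_def fB0_def nth_append dvd2_SS dvd2_1)

theorem lemma6:
  shows "\<exists>(r::nat) (c::real)
           (fA :: nat \<Rightarrow> 'a list \<Rightarrow> nat \<Rightarrow> bool list list \<Rightarrow> bool list)
           (fB :: nat \<Rightarrow> 'a list \<Rightarrow> nat \<Rightarrow> bool list list \<Rightarrow> bool list)
           (outA :: 'a list \<Rightarrow> nat \<Rightarrow> bool list list \<Rightarrow> nat)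
           (outB :: 'a list \<Rightarrow> nat \<Rightarrow> bool list list \<Rightarrow> nat).
         \<forall>A B :: 'a list.
           let k = lcp (lz77 A) (lz77 B);
               t = transcript fA fB A B k r;
               lcpAB = lcp A B
           in outA A k t = lcpAB \<and> outB B k t = lcpAB \<and>
              real (comm_bits t) \<le> c * log 2 (real lcpAB + 2)"
proof (intro exI allI)
  fix A B :: "'a list"
  define k where "k = lcp (lz77 A) (lz77 B)"
  define L where "L = lcp A B"
  define q where "q = qpos A k"
  have c: "qpos A k = qpos B k" "take (qpos A k) A = take (qpos A k) B"
    using common[of k A B] k_def by auto
  have k': "k = lcp (lz77 B) (lz77 A)" using k_def lcp_comm by metis
  have c': "qpos B k = qpos A k" "take (qpos B k) B = take (qpos B k) A"
    using c by auto
  have fa: "recon B k (fst (info A k)) (snd (info A k)) = take (q + snd (info A k)) A"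
    "fst (info A k) + snd (info A k) \<le> L"
    using info_facts[OF c(2) c(1)] q_def L_def by auto
  have fb: "recon A k (fst (info B k)) (snd (info B k)) = take (q + snd (info B k)) B"
    "fst (info B k) + snd (info B k) \<le> L"
    using info_facts[OF c'(2) c'(1)] q_def L_def c lcp_comm[of A B] by auto
  have ky: "L \<le> q + max (snd (info A k)) (snd (info B k))"
    using key[OF k_def] q_def L_def by simp
  define xA where "xA = lcp A (recon A k (fst (info B k)) (snd (info B k)))"
  define xB where "xB = lcp (recon B k (fst (info A k)) (snd (info A k))) B"
  have xA: "xA = min L (q + snd (info B k))" unfolding xA_def fb(1) lcp_take2 L_def ..
  have xB: "xB = min L (q + snd (info A k))" unfolding xB_def fa(1) lcp_take1 L_def ..
  have mx: "max xA xB = L" using xA xB ky by linarith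
  define t where "t = transcript fA0 fB0 A B k 6"
  have t: "t = [bin (fst (info A k)), bin (fst (info B k)), bin (snd (info A k)),
     bin (snd (info B k)), bin xA, bin xB]"
    unfolding t_def xA_def xB_def by (rule transcript6)
  have oA: "outA0 A k t = L" unfolding outA0_def t using mx xA_def by simp
  have oB: "outB0 B k t = L" unfolding outB0_def t using mx xB_def by simp
  have b: "\<And>n. n \<le> L \<Longrightarrow> real (length (bin n)) \<le> 2 * log 2 (real L + 2)"
    using bin_len_log by blast
  have "real (comm_bits t) = real (length (bin (fst (info A k)))) + real (length (bin (fst (info B k))))
     + real (length (bin (snd (info A k)))) + real (length (bin (snd (info B k))))
     + real (length (bin xA)) + real (length (bin xB))"
    unfolding comm_bits_def t by simp
  also have "\<dots> \<le> 12 * log 2 (real L + 2)"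
    using b[of "fst (info A k)"] b[of "fst (info B k)"] b[of "snd (info A k)"]
      b[of "snd (info B k)"] b[of xA] b[of xB] fa(2) fb(2) xA xB by simp
  finally have cb: "real (comm_bits t) \<le> 12 * log 2 (real L + 2)" .
  show "let k = lcp (lz77 A) (lz77 B); t = transcript fA0 fB0 A B k 6; lcpAB = lcp A B
     in outA0 A k t = lcpAB \<and> outB0 B k t = lcpAB \<and>
        real (comm_bits t) \<le> 12 * log 2 (real lcpAB + 2)"
    unfolding Let_def k_def[symmetric] t_def[symmetric] L_def[symmetric] using oA oB cb by simp
qed

end
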